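(* Suppose $K<m$, $m\ge2$, $n\ge3$, the belief prior $\mathcal D$ has full support, the weights satisfy $\max_iw_i<1/2$, and there is no reserve ($c=0$). Then the VCG scoring mechanism is strictly interim incentive compatible up to equal-shift misreports: for every recommender $i$, every belief $p_i\in[0,1]^m$, and every report $\hat p_i\in[0,1]^m$ that is not an equal-shift misreport of $p_i$ (i.e. $\hat p_i\ne p_i$ and there exist $q,q'$ with $p_{iq}-p_{iq'}\ne\hat p_{iq}-\hat p_{iq'}$), $\mathbb E_{p_{-i}\sim\mathcal D_{-i}}[U_i(p_i,p_i,p_{-i})]>\mathbb E_{p_{-i}\sim\mathcal D_{-i}}[U_i(p_i,\hat p_i,p_{-i})]$.
   Context: Setting: borrowers $M=\{1,\dots,m\}$, recommenders $N=\{1,\dots,n\}$; recommender $i$ has belief $p_{iq}\in[0,1]$ that $q$ repays and reports $\hat p_{iq}\in[0,1]$ simultaneously; $p_{-i}$ denotes the others' beliefs. Beliefs $p\sim\mathcal D$ on $[0,1]^{n\times m}$ (common knowledge), with $\mathcal D_{-i}$ the marginal of $p_{-i}$; full support means every nonempty relatively open subset has positive probability. Liquidity $K$, weights $w_i>0$, $\sum_iw_i=1$. VCG scoring mechanism without reserve: reported value $\hat v_i(a)=\sum_{q\in M}a_qw_i\hat p_{iq}$, true value $v_i(a)=\sum_{q}a_qw_ip_{iq}$ for $a\in\{0,1\}^m$. Allocation $x(\hat p)\in\arg\max\{\sum_{i\in N}\hat v_i(a):a\in\{0,1\}^m,\sum_qa_q\le K\}$; immediate payment made by $i$: $t_i(\hat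 p)=\sum_{j\ne i}\hat v_j(x^{-i}(\hat p_{-i}))-\sum_{j\ne i}\hat v_j(x(\hat p))$ with $x^{-i}(\hat p_{-i})\in\arg\max\{\sum_{j\ne i}\hat v_j(a)\}$ over the same feasible set; outcome-contingent payment to $i$ for each loaned $q$: $w_i$ if $q$ repays, $0$ otherwise. Utility of $i$ with belief $p_i$: $U_i(p_i,\hat p_i,\hat p_{-i})=v_i(x(\hat p))-t_i(\hat p)$. *)

theory Defs
  imports "HOL-Probability.Probability"
begin

text \<open>Recommenders are the elements of a finite type 'n, borrowers the elements of a
finite type 'm.  A belief (or report) profile is a matrix P :: real^'m^'n with
P$i$q the probability recommender i assigns to borrower q repaying.
An allocation is the set of funded borrowers (a \<in> {0,1}^m identified with its support).\<close>

definition unit_cube :: "(real^'m^'n) set" where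
  "unit_cube = {P. \<forall>i q. 0 \<le> P$i$q \<and> P$i$q \<le> 1}"

definition unit_box :: "(real^'m) set" where
  "unit_box = {r. \<forall>q. 0 \<le> r$q \<and> r$q \<le> 1}"

definition feasible :: "nat \<Rightarrow> ('m::finite) set set" where
  "feasible K = {A. card A \<le> K}"

definition rep_value :: "real^'n \<Rightarrow> real^'m^'n \<Rightarrow> 'n \<Rightarrow> ('m::finite) set \<Rightarrow> real" where
  "rep_value w P j A = (\<Sum>q\<in>A. w$j * P$j$q)"

definition total_value :: "real^'n \<Rightarrow> real^'m^'n \<Rightarrow> ('m::finite) set \<Rightarrow> real" where
  "total_value w P A = (\<Sum>j\<in>(UNIV::'n::finite set). rep_value w P j A)"

definition others_value :: "real^'n \<Rightarrow> real^'m^'n \<Rightarrow> 'n \<Rightarrow> ('m::finite) set \<Rightarrow> real" where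
  "others_value w P i A = (\<Sum>j\<in>(UNIV::'n::finite set) - {i}. rep_value w P j A)"

definition vcg_allocation ::
  "real^'n \<Rightarrow> nat \<Rightarrow> (real^('m::finite)^('n::finite) \<Rightarrow> 'm set) \<Rightarrow> bool" where
  "vcg_allocation w K x \<longleftrightarrow>
     (\<forall>P\<in>unit_cube. x P \<in> feasible K \<and>
        (\<forall>A\<in>feasible K. total_value w P A \<le> total_value w P (x P)))"

definition vcg_payment ::
  "real^'n \<Rightarrow> nat \<Rightarrow> (real^('m::finite)^('n::finite) \<Rightarrow> 'm set) \<Rightarrow> 'n \<Rightarrow> real^'m^'n \<Rightarrow> real" where
  "vcg_payment w K x i P =
     Max (others_value w P i ` feasible K) - others_value w P i (x P)"

definition upd_row :: "real^'m^'n \<Rightarrow> 'n \<Rightarrow> real^'m \<Rightarrow> real^'m^'n" where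
  "upd_row P i r = (\<chi> j. if j = i then r else P$j)"

text \<open>Utility U_i(p_i, ph_i, p_{-i}) of recommender i with belief bel reporting rep, the
other reports being the rows j \<noteq> i of P.\<close>
definition utility ::
  "real^'n \<Rightarrow> nat \<Rightarrow> (real^('m::finite)^('n::finite) \<Rightarrow> 'm set) \<Rightarrow> 'n
    \<Rightarrow> real^'m \<Rightarrow> real^'m \<Rightarrow> real^'m^'n \<Rightarrow> real" where
  "utility w K x i bel rep P =
     (let Q = upd_row P i rep in (\<Sum>q\<in>x Q. w$i * bel$q) - vcg_payment w K x i Q)"

definition full_support :: "(real^('m::finite)^('n::finite)) measure \<Rightarrow> bool" where
  "full_support D \<longleftrightarrow>
     (\<forall>U. openin (top_of_set unit_cube) U \<and> U \<noteq> {} \<longrightarrow> emeasure D U > 0)"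

end

theory Submission imports Defs begin


definition sc :: "real^'n \<Rightarrow> 'n \<Rightarrow> real^'m^'n \<Rightarrow> 'm \<Rightarrow> real" where
  "sc w i P z = (\<Sum>j\<in>(UNIV::'n::finite set) - {i}. w$j * P$j$z)"

lemma others_sc: "others_value w P i A = (\<Sum>z\<in>A. sc w i P z)"
  unfolding others_value_def rep_value_def sc_def
  by (rule sum.swap)

lemma others_upd: "others_value w (upd_row P i r) i A = others_value w P i A"
  unfolding others_value_def rep_value_def upd_row_def by simp

lemma total_upd:
  fixes P :: "real^('m::finite)^('n::finite)"
  shows "total_value w (upd_row P i r) A = (\<Sum>z\<in>A. w$i * r$z) + others_value w P i A"
proof -
  have "total_value w (upd_row P i r) A = rep_value w (upd_row P i r) i A + others_value w (upd_row P i r) i A"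
    unfolding total_value_def others_value_def
    by (simp add: sum.remove[of UNIV i])
  then show ?thesis using others_upd by (simp add: rep_value_def upd_row_def)
qed

lemma utility_eq:
  "utility w K x i bel r P =
    ((\<Sum>z\<in>x (upd_row P i r). w$i * bel$z) + others_value w P i (x (upd_row P i r)))
     - Max (others_value w P i ` feasible K)"
proof -
  have "others_value w (upd_row P i r) i = others_value w P i" by (rule ext) (rule others_upd)
  thus ?thesis unfolding utility_def vcg_payment_def Let_def by simp
qed

lemma exch1:
  fixes c :: "'m::finite \<Rightarrow> real"
  assumes A: "A \<in> feasible K" and opt: "\<forall>B\<in>feasible K. sum c B \<le> sum c A"
    and y: "y \<in> A" and z: "z \<notin> A"
  shows "c z \<le> c y"
proof -
  let ?B = "insert z (A - {y})"
  have "card A > 0" using y by (auto simp: card_gt_0_iff)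
  have "card ?B = card A" using y z \<open>card A > 0\<close> by (auto simp add: card_insert_if card_Diff_singleton_if card_gt_0_iff)
  hence "?B \<in> feasible K" using A by (simp add: feasible_def)
  hence "sum c ?B \<le> sum c A" using opt by blast
  moreover have "sum c ?B = sum c A - c y + c z"
    using y z by (simp add: sum_diff1)
  ultimately show ?thesis by simp
qed

lemma exch2:
  fixes c :: "'m::finite \<Rightarrow> real"
  assumes A: "A \<in> feasible K" and opt: "\<forall>B\<in>feasible K. sum c B \<le> sum c A"
    and k: "card A < K" and z: "z \<notin> A"
  shows "c z \<le> 0"
proof -
  have "card (insert z A) \<le> K" using k z by simp
  hence "insert z A \<in> feasible K" by (simp add: feasible_def)
  hence "sum c (insert z A) \<le> sum c A" using opt by blast
  thus ?thesis using z by simp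
qed

lemma comb:
  fixes c d :: "'m::finite \<Rightarrow> real"
  assumes A: "A \<in> feasible K" and opt: "\<forall>B\<in>feasible K. sum c B \<le> sum c A"
    and T: "card T + 1 = K" "q \<notin> T" "q' \<notin> T" "q \<noteq> q'"
    and c1: "c q > 0" and c2: "\<forall>z. z \<notin> T \<and> z \<noteq> q \<longrightarrow> c z < c q"
    and c3: "\<forall>t\<in>T. c q' < c t" and d1: "d q < d q'"
  shows "\<exists>B\<in>feasible K. sum d A < sum d B"
proof -
  have qA: "q \<in> A"
  proof (rule ccontr)
    assume nq: "q \<notin> A"
    show False
    proof (cases "card A < K")
      case True
      thus False using exch2[OF A opt True nq] c1 by simp
    next
      case False
      hence "card T < card A" using T by simp
      hence "\<not> A \<subseteq> T" using card_mono[of T A] by auto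
      then obtain z where "z \<in> A" "z \<notin> T" by blast
      moreover have "z \<noteq> q" using nq \<open>z \<in> A\<close> by auto
      ultimately show False using exch1[OF A opt, of z q] nq c2 by fastforce
    qed
  qed
  have q'A: "q' \<notin> A"
  proof
    assume q'A: "q' \<in> A"
    have "\<not> T \<subseteq> A"
    proof
      assume "T \<subseteq> A"
      hence "insert q (insert q' T) \<subseteq> A" using qA q'A by auto
      hence "card (insert q (insert q' T)) \<le> card A" by (simp add: card_mono)
      moreover have "card (insert q (insert q' T)) = K + 1" using T by simp
      moreover have "card A \<le> K" using A by (simp add: feasible_def)
      ultimately show False by simp
    qed
    then obtain t where "t \<in> T" "t \<notin> A" by blast
    thus False using exch1[OF A opt q'A, of t] c3 by fastforce
  qed
  let ?B = "insert q' (A - {q})"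
  have "card A > 0" using qA by (auto simp: card_gt_0_iff)
  have "card ?B = card A" using qA q'A \<open>card A > 0\<close> by (auto simp add: card_insert_if card_Diff_singleton_if card_gt_0_iff)
  hence "?B \<in> feasible K" using A by (simp add: feasible_def)
  moreover have "sum d ?B = sum d A - d q + d q'"
    using qA q'A by (simp add: sum_diff1)
  ultimately show ?thesis using d1 by (intro bexI[of _ ?B]) auto
qed



lemma cont_sc: "continuous_on UNIV (\<lambda>P::real^('m::finite)^('n::finite). sc w i P z)"
  unfolding sc_def by (intro continuous_intros)

lemma cont_others: "continuous_on UNIV (\<lambda>P::real^('m::finite)^('n::finite). others_value w P i A)"
  unfolding others_sc by (intro continuous_intros cont_sc)

lemma cont_upd: "continuous_on UNIV (\<lambda>P::real^('m::finite)^('n::finite). upd_row P i r)"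
  unfolding upd_row_def by (intro continuous_intros) (case_tac "j = i", auto intro: continuous_intros)

lemma meas_utility:
  fixes x :: "real^('m::finite)^('n::finite) \<Rightarrow> 'm set"
  assumes x: "x \<in> borel \<rightarrow>\<^sub>M count_space UNIV"
  shows "(\<lambda>P. utility w K x i bel r P) \<in> borel_measurable borel"
proof -
  have g: "(\<lambda>P. x (upd_row P i r)) \<in> borel \<rightarrow>\<^sub>M count_space UNIV"
    using measurable_comp[OF borel_measurable_continuous_onI[OF cont_upd] x] by (simp add: o_def)
  have h: "(\<lambda>P. (\<lambda>A P. (\<Sum>z\<in>A. w$i * bel$z) + others_value w P i A) (x (upd_row P i r)) P) \<in> borel_measurable borel"
    by (rule measurable_compose_countable[OF _ g])
       (intro borel_measurable_continuous_onI continuous_intros cont_others)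
  have m: "(\<lambda>P. Max ((\<lambda>A. others_value w P i A) ` feasible K)) \<in> borel_measurable borel"
    by (rule borel_measurable_Max) (auto intro: borel_measurable_continuous_onI cont_others)
  show ?thesis unfolding utility_eq using h m by (intro borel_measurable_diff) auto
qed



lemma upd_cube: "P \<in> unit_cube \<Longrightarrow> r \<in> unit_box \<Longrightarrow> upd_row P i r \<in> unit_cube"
  unfolding unit_cube_def unit_box_def upd_row_def by auto

lemma sumW:
  fixes w :: "real^('n::finite)"
  assumes "(\<Sum>j\<in>UNIV. w$j) = 1"
  shows "(\<Sum>j\<in>UNIV - {i}. w$j) = 1 - w$i"
  using assms sum.remove[of "UNIV::'n set" i "\<lambda>j. w$j"] by simp

lemma sc_bounds:
  fixes w :: "real^('n::finite)" and P :: "real^('m::finite)^'n"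
  assumes "\<forall>j. w$j > 0" "(\<Sum>j\<in>UNIV. w$j) = 1" "P \<in> unit_cube"
  shows "0 \<le> sc w i P z" "sc w i P z \<le> 1"
proof -
  show "0 \<le> sc w i P z" unfolding sc_def
    using assms(1,3) by (intro sum_nonneg) (auto simp: unit_cube_def less_imp_le)
  have "sc w i P z \<le> (\<Sum>j\<in>UNIV - {i}. w$j)" unfolding sc_def
    using assms(1,3) by (intro sum_mono) (auto simp: unit_cube_def less_imp_le intro: mult_left_le)
  also have "\<dots> \<le> 1" using sumW[OF assms(2)] assms(1) by (simp add: less_imp_le)
  finally show "sc w i P z \<le> 1" .
qed

lemma others_bounds:
  fixes w :: "real^('n::finite)" and P :: "real^('m::finite)^'n"
  assumes "\<forall>j. w$j > 0" "(\<Sum>j\<in>UNIV. w$j) = 1" "P \<in> unit_cube"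
  shows "0 \<le> others_value w P i A" "others_value w P i A \<le> CARD('m)"
proof -
  show "0 \<le> others_value w P i A" unfolding others_sc
    using sc_bounds[OF assms] by (intro sum_nonneg) auto
  have "others_value w P i A \<le> of_nat (card A) * (1::real)" unfolding others_sc
    using sc_bounds[OF assms] by (intro sum_bounded_above) auto
  also have "\<dots> \<le> CARD('m)" by (simp add: card_mono)
  finally show "others_value w P i A \<le> CARD('m)" .
qed

lemma max_bounds:
  fixes w :: "real^('n::finite)" and P :: "real^('m::finite)^'n"
  assumes "\<forall>j. w$j > 0" "(\<Sum>j\<in>UNIV. w$j) = 1" "P \<in> unit_cube"
  shows "0 \<le> Max (others_value w P i ` feasible K)" "Max (others_value w P i ` feasible K) \<le> CARD('m)"
proof -
  have fin: "finite (others_value w P i ` feasible K)" by simp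
  have e: "{} \<in> feasible K" by (simp add: feasible_def)
  have "others_value w P i {} \<le> Max (others_value w P i ` feasible K)"
    using e fin by (intro Max_ge) auto
  thus "0 \<le> Max (others_value w P i ` feasible K)" by (simp add: others_sc)
  show "Max (others_value w P i ` feasible K) \<le> CARD('m)"
    using fin e others_bounds[OF assms] by (subst Max_le_iff) auto
qed

lemma bel_bounds:
  fixes w :: "real^('n::finite)" and bel :: "real^('m::finite)"
  assumes "\<forall>j. w$j > 0" "(\<Sum>j\<in>UNIV. w$j) = 1" "bel \<in> unit_box"
  shows "0 \<le> (\<Sum>z\<in>A. w$i * bel$z)" "(\<Sum>z\<in>A. w$i * bel$z) \<le> CARD('m)"
proof -
  have wi: "0 < w$i" "w$i \<le> 1" using assms(1) sumW[OF assms(2), of i]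
    by (auto intro: sum_nonneg less_imp_le simp: algebra_simps)
       (smt (verit) assms(1) sum_nonneg)
  show "0 \<le> (\<Sum>z\<in>A. w$i * bel$z)" using wi assms(3) by (intro sum_nonneg) (auto simp: unit_box_def)
  have "(\<Sum>z\<in>A. w$i * bel$z) \<le> of_nat (card A) * (1::real)" using wi assms(3)
    by (intro sum_bounded_above) (auto simp: unit_box_def intro: mult_le_one)
  also have "\<dots> \<le> CARD('m)" by (simp add: card_mono)
  finally show "(\<Sum>z\<in>A. w$i * bel$z) \<le> CARD('m)" .
qed

lemma utility_bound:
  fixes w :: "real^('n::finite)" and P :: "real^('m::finite)^'n"
  assumes "\<forall>j. w$j > 0" "(\<Sum>j\<in>UNIV. w$j) = 1" "P \<in> unit_cube" "bel \<in> unit_box"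
  shows "norm (utility w K x i bel r P) \<le> 2 * CARD('m)"
  unfolding utility_eq
  using bel_bounds[OF assms(1,2,4), of i "x (upd_row P i r)"]
    others_bounds[OF assms(1-3), of i "x (upd_row P i r)"] max_bounds[OF assms(1-3), of i K]
  by (simp add: abs_le_iff)



lemma total_sum:
  "total_value w (upd_row P i r) A = (\<Sum>z\<in>A. w$i * r$z + sc w i P z)"
  unfolding total_upd others_sc sum.distrib by simp

lemma util_diff:
  fixes x :: "real^('m::finite)^('n::finite) \<Rightarrow> 'm set"
  shows "utility w K x i bel bel P - utility w K x i bel r P =
    total_value w (upd_row P i bel) (x (upd_row P i bel)) - total_value w (upd_row P i bel) (x (upd_row P i r))"
  unfolding utility_eq total_upd by simp

lemma pw_le:
  fixes x :: "real^('m::finite)^('n::finite) \<Rightarrow> 'm set"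
  assumes "vcg_allocation w K x" "P \<in> unit_cube" "bel \<in> unit_box" "r \<in> unit_box"
  shows "utility w K x i bel r P \<le> utility w K x i bel bel P"
proof -
  have "x (upd_row P i r) \<in> feasible K" using assms upd_cube unfolding vcg_allocation_def by blast
  hence "total_value w (upd_row P i bel) (x (upd_row P i r)) \<le> total_value w (upd_row P i bel) (x (upd_row P i bel))"
    using assms upd_cube unfolding vcg_allocation_def by blast
  thus ?thesis using util_diff[of w K x i bel P r] by simp
qed

lemma pw_less:
  fixes x :: "real^('m::finite)^('n::finite) \<Rightarrow> 'm set"
  assumes vcg: "vcg_allocation w K x" and P: "P \<in> unit_cube" and b: "bel \<in> unit_box" and r: "r \<in> unit_box"
    and T: "card T + 1 = K" "q \<notin> T" "q' \<notin> T" "q \<noteq> q'"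
    and c1: "0 < w$i * r$q + sc w i P q"
    and c2: "\<forall>z. z \<notin> T \<and> z \<noteq> q \<longrightarrow> w$i * r$z + sc w i P z < w$i * r$q + sc w i P q"
    and c3: "\<forall>t\<in>T. w$i * r$q' + sc w i P q' < w$i * r$t + sc w i P t"
    and d1: "w$i * bel$q + sc w i P q < w$i * bel$q' + sc w i P q'"
  shows "utility w K x i bel r P < utility w K x i bel bel P"
proof -
  let ?A = "x (upd_row P i r)"
  have Qr: "upd_row P i r \<in> unit_cube" using P r upd_cube by blast
  have Qb: "upd_row P i bel \<in> unit_cube" using P b upd_cube by blast
  have A: "?A \<in> feasible K" using vcg Qr unfolding vcg_allocation_def by blast
  have opt: "\<forall>B\<in>feasible K. sum (\<lambda>z. w$i * r$z + sc w i P z) B \<le> sum (\<lambda>z. w$i * r$z + sc w i P z) ?A"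
    using vcg Qr unfolding vcg_allocation_def by (simp add: total_sum[symmetric])
  obtain B where B: "B \<in> feasible K"
     "sum (\<lambda>z. w$i * bel$z + sc w i P z) ?A < sum (\<lambda>z. w$i * bel$z + sc w i P z) B"
    using comb[OF A opt T, of "\<lambda>z. w$i * bel$z + sc w i P z"] c1 c2 c3 d1 by blast
  have "total_value w (upd_row P i bel) B \<le> total_value w (upd_row P i bel) (x (upd_row P i bel))"
    using vcg Qb B(1) unfolding vcg_allocation_def by blast
  hence "total_value w (upd_row P i bel) ?A < total_value w (upd_row P i bel) (x (upd_row P i bel))"
    using B(2) unfolding total_sum by simp
  thus ?thesis using util_diff[of w K x i bel P r] by simp
qed



theorem theorem5:
  fixes D :: "(real^('m::finite)^('n::finite)) measure"
    and w :: "real^'n" and K :: nat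
    and x :: "real^'m^'n \<Rightarrow> 'm set"
    and i :: 'n and bel rep :: "real^'m"
  assumes "prob_space D" and "sets D = sets borel"
    and "emeasure D unit_cube = 1"
    and "full_support D"
    and "1 \<le> K" and "K < CARD('m)" and "CARD('m) \<ge> 2" and "CARD('n) \<ge> 3"
    and "\<forall>j. w$j > 0" and "(\<Sum>j\<in>UNIV. w$j) = 1" and "\<forall>j. w$j < 1/2"
    and "vcg_allocation w K x"
    and "x \<in> borel \<rightarrow>\<^sub>M count_space UNIV"
    and "bel \<in> unit_box" and "rep \<in> unit_box"
    and "rep \<noteq> bel"
    and "\<exists>q q'. bel$q - bel$q' \<noteq> rep$q - rep$q'"
  shows "(\<integral>P. utility w K x i bel bel P \<partial>D) > (\<integral>P. utility w K x i bel rep P \<partial>D)"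
proof -
  interpret prob_space D by fact
  note wpos = assms(9) and wsum = assms(10) and vcg = assms(12)
  have cube_sets: "unit_cube \<in> sets D"
    using assms(3) emeasure_notin_sets by force
  have AEc: "AE P in D. P \<in> unit_cube"
    by (rule AE_prob_1) (simp add: measure_def assms(3))
  have measD: "\<And>r. (\<lambda>P. utility w K x i bel r P) \<in> borel_measurable D"
    using meas_utility[OF assms(13)] measurable_cong_sets[OF assms(2) refl] by blast
  have intg: "\<And>r. integrable D (\<lambda>P. utility w K x i bel r P)"
    by (rule integrable_const_bound[where B="2 * CARD('m)"])
       (use AEc utility_bound[OF wpos wsum _ assms(14)] measD in auto)
  obtain q q' where qq: "bel$q - bel$q' < rep$q - rep$q'"
  proof -
    obtain a b where "bel$a - bel$b \<noteq> rep$a - rep$b" using assms(17) by blast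
    then consider "bel$a - bel$b < rep$a - rep$b" | "bel$b - bel$a < rep$b - rep$a" by linarith
    thus thesis using that by metis
  qed
  hence qne: "q \<noteq> q'" by auto
  have "K - 1 \<le> card (UNIV - {q, q'})"
    using assms(6) qne by (simp add: card_Diff_subset)
  then obtain T where T: "T \<subseteq> UNIV - {q, q'}" "card T = K - 1"
    by (rule obtain_subset_with_card_n) 
  have Tc: "card T + 1 = K" "q \<notin> T" "q' \<notin> T" using T assms(5) by auto
  define wi where "wi = w$i"
  define W where "W = 1 - wi"
  have wi: "0 < wi" "wi < 1/2" using wpos assms(11) by (auto simp: wi_def)
  have rb: "\<And>z. 0 \<le> rep$z \<and> rep$z \<le> 1" "\<And>z. 0 \<le> bel$z \<and> bel$z \<le> 1"
    using assms(14,15) by (auto simp: unit_box_def)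
  have wr: "\<And>z. 0 \<le> wi * rep$z \<and> wi * rep$z \<le> wi" "\<And>z. 0 \<le> wi * bel$z \<and> wi * bel$z \<le> wi"
    using rb wi by (auto intro: mult_left_le)
  define l where "l = wi * bel$q - wi * bel$q'"
  define u where "u = wi * rep$q - wi * rep$q'"
  have lu: "l < u" unfolding l_def u_def
    using mult_strict_left_mono[OF qq wi(1)] by (simp add: algebra_simps)
  define e where "e = (l + u) / 2"
  have e: "l < e" "e < u" "-wi \<le> e" using lu wr[of q] wr[of q'] unfolding e_def l_def u_def by auto
  define a where "a = max (wi - wi * rep$q) (-e)"
  define b where "b = min (W - wi * rep$q' - e) W"
  have wq: "0 \<le> wi * rep$q" "wi * rep$q \<le> wi" "0 \<le> wi * rep$q'" "wi * rep$q' \<le> wi"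
    using wr(1)[of q] wr(1)[of q'] by auto
  have "a < b" unfolding a_def b_def W_def
    apply (simp only: max_less_iff_conj min_less_iff_conj)
    using e wi wq unfolding u_def by linarith
  then obtain \<sigma> where \<sigma>: "a < \<sigma>" "\<sigma> < b" using dense by blast
  define \<sigma>' where "\<sigma>' = \<sigma> + e"
  have Wpos: "W > 0" using wi by (simp add: W_def)
  have \<sigma>r: "0 \<le> \<sigma>" "\<sigma> \<le> W" "0 \<le> \<sigma>'" "\<sigma>' \<le> W" "wi - wi * rep$q < \<sigma>" "\<sigma>' < W - wi * rep$q'"
  proof -
    have s4: "wi - wi * rep$q < \<sigma>" "-e < \<sigma>" "\<sigma> < W - wi * rep$q' - e" "\<sigma> < W"
      using \<sigma> unfolding a_def b_def by auto
    show "0 \<le> \<sigma>" "\<sigma> \<le> W" "0 \<le> \<sigma>'" "\<sigma>' \<le> W" "wi - wi * rep$q < \<sigma>" "\<sigma>' < W - wi * rep$q'"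
      using s4 wq wi e unfolding \<sigma>'_def W_def by linarith+
  qed
  define f where "f z = (if z \<in> T then 1 else if z = q then \<sigma> / W else if z = q' then \<sigma>' / W else 0)" for z
  define P0 :: "real^'m^'n" where "P0 = (\<chi> j. \<chi> z. f z)"
  have f01: "0 \<le> f z \<and> f z \<le> 1" for z
    unfolding f_def using \<sigma>r Wpos by auto
  have P0c: "P0 \<in> unit_cube" unfolding unit_cube_def P0_def using f01 by simp
  have scP0: "sc w i P0 z = (if z \<in> T then W else if z = q then \<sigma> else if z = q' then \<sigma>' else 0)" for z
  proof -
    have "sc w i P0 z = (\<Sum>j\<in>UNIV - {i}. w$j) * f z"
      unfolding sc_def P0_def by (simp add: sum_distrib_right)
    also have "\<dots> = W * f z" using sumW[OF wsum] by (simp add: W_def wi_def)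
    finally show ?thesis unfolding f_def using Wpos by auto
  qed
  define V where "V =
    {P. 0 < w$i * rep$q + sc w i P q} \<inter> {P. w$i * bel$q + sc w i P q < w$i * bel$q' + sc w i P q'}
    \<inter> (\<Inter>z\<in>- insert q T. {P. w$i * rep$z + sc w i P z < w$i * rep$q + sc w i P q})
    \<inter> (\<Inter>t\<in>T. {P. w$i * rep$q' + sc w i P q' < w$i * rep$t + sc w i P t})"
  have Vo: "open V" unfolding V_def
    by (intro open_Int open_INT open_Collect_less continuous_intros cont_sc finite ballI) 
  have P0V: "P0 \<in> V"
  proof -
    have "0 < wi * rep$q + sc w i P0 q" using scP0[of q] Tc \<sigma>r wr[of q] by simp
    moreover have "wi * bel$q + sc w i P0 q < wi * bel$q' + sc w i P0 q'"
      using scP0[of q] scP0[of q'] Tc qne e unfolding \<sigma>'_def l_def by simp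
    moreover have "wi * rep$z + sc w i P0 z < wi * rep$q + sc w i P0 q" if "z \<notin> insert q T" for z
    proof (cases "z = q'")
      case True thus ?thesis using scP0[of q] scP0[of q'] Tc qne e unfolding \<sigma>'_def u_def by simp
    next
      case False thus ?thesis using that scP0[of q] scP0[of z] Tc \<sigma>r wr[of z] wr[of q]
        by (simp add: algebra_simps)
    qed
    moreover have "wi * rep$q' + sc w i P0 q' < wi * rep$t + sc w i P0 t" if "t \<in> T" for t
      using that scP0[of q'] scP0[of t] Tc qne \<sigma>r wr[of t] by auto
    ultimately show ?thesis unfolding V_def wi_def by auto
  qed
  define U where "U = unit_cube \<inter> V"
  have Upos: "emeasure D U > 0"
  proof -
    have "openin (top_of_set unit_cube) (unit_cube \<inter> V)" by (rule openin_open_Int[OF Vo])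
    moreover have "unit_cube \<inter> V \<noteq> {}" using P0c P0V by blast
    ultimately show ?thesis using assms(4) unfolding full_support_def U_def by blast
  qed
  have Usets: "U \<in> sets D" unfolding U_def
    using cube_sets Vo assms(2) by (metis borel_open sets.Int)
  have Ult: "utility w K x i bel rep P < utility w K x i bel bel P" if "P \<in> U" for P
  proof -
    have P: "P \<in> unit_cube" "P \<in> V" using that by (auto simp: U_def)
    show ?thesis
      by (rule pw_less[OF vcg P(1) assms(14,15) Tc qne]) (use P(2) in \<open>auto simp: V_def\<close>)
  qed
  show ?thesis
  proof (rule integral_less_AE[OF intg intg, where A=U])
    show "emeasure D U \<noteq> 0" using Upos by simp
    show "U \<in> sets D" by fact
    show "AE P in D. P \<in> U \<longrightarrow> utility w K x i bel rep P \<noteq> utility w K x i bel bel P"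
      using Ult by (auto intro!: AE_I2 simp: less_imp_neq)
    show "AE P in D. utility w K x i bel rep P \<le> utility w K x i bel bel P"
      using AEc by eventually_elim (rule pw_le[OF vcg _ assms(14,15)])
  qed
qed

end
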